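(* Let $X$, $H$, $H_0$ be arbitrary Hermitian $N\times N$ matrices. For every $t\in\mathbb{R}$, $$e^{-iH_0t}e^{iHt}Xe^{-iHt}e^{iH_0t}-e^{i(H-H_0)t}Xe^{-i(H-H_0)t}=\sum_{\ell\ge2}\frac{(it)^\ell}{\ell!}C_\ell,$$ where each $C_\ell$ is a sum of at most $2^\ell\ell^2$ nested commutators of order $\ell-1$ of the form $[Z_1,[Z_2,[\cdots[Z_{\ell-1},X]\cdots]]]$ in which exactly one $Z_j$ equals $[H,-H_0]$ and every other $Z_j$ is either $H$ or $-H_0$.
   Context: $[A,B]=AB-BA$. *)

theory Defs
  imports "HOL-Analysis.Analysis"
begin

type_synonym 'n cmat = "complex ^ 'n ^ 'n"

definition hermitian :: "'n::finite cmat \<Rightarrow> bool" where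
  "hermitian A \<longleftrightarrow> (\<forall>i j. A $ i $ j = cnj (A $ j $ i))"

definition cscale :: "complex \<Rightarrow> 'n::finite cmat \<Rightarrow> 'n cmat" where
  "cscale c A = (\<chi> i j. c * A $ i $ j)"

definition mpow :: "'n::finite cmat \<Rightarrow> nat \<Rightarrow> 'n cmat" where
  "mpow A k = ((\<lambda>B. A ** B) ^^ k) (mat 1)"

definition mexp :: "'n::finite cmat \<Rightarrow> 'n cmat" where
  "mexp A = (\<Sum>k. (1 / fact k) *\<^sub>R mpow A k)"

definition comm :: "'n::finite cmat \<Rightarrow> 'n cmat \<Rightarrow> 'n cmat" where
  "comm A B = A ** B - B ** A"

definition nested_comm :: "'n::finite cmat list \<Rightarrow> 'n cmat \<Rightarrow> 'n cmat" where
  "nested_comm Zs X = foldr comm Zs X"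

definition admissible :: "nat \<Rightarrow> 'n::finite cmat \<Rightarrow> 'n cmat \<Rightarrow> 'n cmat list \<Rightarrow> bool" where
  "admissible l H H0 Zs \<longleftrightarrow> length Zs = l - 1 \<and>
     (\<exists>j < length Zs. Zs ! j = comm H (- H0) \<and>
        (\<forall>k < length Zs. k \<noteq> j \<longrightarrow> Zs ! k = H \<or> Zs ! k = - H0))"

end

theory Submission
  imports Defs
begin


typedef (overloaded) ('a::finite) op = "UNIV :: ((complex^'a^'a) \<Rightarrow>\<^sub>L (complex^'a^'a)) set"
  morphisms rep Abs by auto

setup_lifting type_definition_op

instantiation op :: (finite) real_normed_vector
begin
lift_definition norm_op :: "'a op \<Rightarrow> real" is norm .
lift_definition minus_op :: "'a op \<Rightarrow> 'a op \<Rightarrow> 'a op" is "(-)" .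
lift_definition plus_op :: "'a op \<Rightarrow> 'a op \<Rightarrow> 'a op" is "(+)" .
lift_definition uminus_op :: "'a op \<Rightarrow> 'a op" is "uminus" .
lift_definition zero_op :: "'a op" is "0" .
lift_definition scaleR_op :: "real \<Rightarrow> 'a op \<Rightarrow> 'a op" is "scaleR" .
definition dist_op :: "'a op \<Rightarrow> 'a op \<Rightarrow> real" where "dist_op a b = norm (a - b)"
definition uniformity_op :: "('a op \<times> 'a op) filter"
  where "uniformity_op = (INF e\<in>{0 <..}. principal {(x, y). dist x y < e})"
definition open_op :: "'a op set \<Rightarrow> bool"
  where "open_op S = (\<forall>x\<in>S. \<forall>\<^sub>F (x', y) in uniformity. x' = x \<longrightarrow> y \<in> S)"
definition sgn_op :: "'a op \<Rightarrow> 'a op" where "sgn_op x = scaleR (inverse (norm x)) x"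
instance
  apply standard
  unfolding dist_op_def open_op_def sgn_op_def uniformity_op_def
  apply (rule refl | (transfer, force simp: norm_triangle_ineq algebra_simps))+
  done
end

instantiation op :: (finite) real_normed_algebra_1
begin
lift_definition times_op :: "'a op \<Rightarrow> 'a op \<Rightarrow> 'a op" is "blinfun_compose" .
lift_definition one_op :: "'a op" is "id_blinfun" .
instance
proof
  fix a b c :: "'a op" and r :: real
  show "a * b * c = a * (b * c)" by transfer (auto intro!: blinfun_eqI)
  show "(a + b) * c = a * c + b * c" by transfer (auto intro!: blinfun_eqI simp: blinfun.bilinear_simps)
  show "a * (b + c) = a * b + a * c" by transfer (auto intro!: blinfun_eqI simp: blinfun.bilinear_simps)
  show "1 * a = a" by transfer (auto intro!: blinfun_eqI)
  show "a * 1 = a" by transfer (auto intro!: blinfun_eqI)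
  show "scaleR r a * b = scaleR r (a * b)" by transfer (auto intro!: blinfun_eqI simp: blinfun.bilinear_simps)
  show "a * scaleR r b = scaleR r (a * b)" by transfer (auto intro!: blinfun_eqI simp: blinfun.bilinear_simps)
  show "norm (a * b) \<le> norm a * norm b" by transfer (rule norm_blinfun_compose)
  show "norm (1::'a op) = 1" by transfer simp
  show "(0::'a op) \<noteq> 1"
  proof transfer
    have "blinfun_apply (id_blinfun :: (complex^'a^'a) \<Rightarrow>\<^sub>L (complex^'a^'a)) (mat 1) \<noteq> blinfun_apply 0 (mat 1)"
      by (simp add: mat_def vec_eq_iff)
    then show "(0 :: (complex^'a^'a) \<Rightarrow>\<^sub>L (complex^'a^'a)) \<noteq> id_blinfun" by metis
  qed
qed
end

lemma tendsto_rep: "(f \<longlongrightarrow> l) F \<longleftrightarrow> ((\<lambda>x. rep (f x)) \<longlongrightarrow> rep l) F"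
  unfolding tendsto_iff dist_norm dist_op_def by (simp add: norm_op.rep_eq minus_op.rep_eq)

lemma Cauchy_rep: "Cauchy X \<longleftrightarrow> Cauchy (\<lambda>n. rep (X n))"
  unfolding Cauchy_def dist_norm dist_op_def by (simp add: norm_op.rep_eq minus_op.rep_eq)

instance op :: (finite) banach
proof
  fix X :: "nat \<Rightarrow> 'a op" assume "Cauchy X"
  then have "convergent (\<lambda>n. rep (X n))" by (simp add: Cauchy_rep Cauchy_convergent)
  then obtain L where "(\<lambda>n. rep (X n)) \<longlonglongrightarrow> L" by (auto simp: convergent_def)
  then have "X \<longlonglongrightarrow> Abs L" by (simp add: tendsto_rep Abs_inverse)
  then show "convergent X" by (auto simp: convergent_def)
qed



fun FW :: "'m \<Rightarrow> 'm \<Rightarrow> nat \<Rightarrow> 'm list list" where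
  "FW a b 0 = [[]]"
| "FW a b (Suc l) = map ((#) b) (FW a b l) @ map (\<lambda>w. w @ [a]) (FW a b l)"

fun CW :: "'m \<Rightarrow> 'm \<Rightarrow> 'm \<Rightarrow> nat \<Rightarrow> 'm list list" where
  "CW a b g 0 = []"
| "CW a b g (Suc l) = map ((#) g) (FW a b l) @ map ((#) b) (CW a b g l) @ map (\<lambda>w. w @ [a]) (CW a b g l)"

fun DW :: "'m \<Rightarrow> 'm \<Rightarrow> 'm \<Rightarrow> nat \<Rightarrow> 'm list list" where
  "DW a b g 0 = []"
| "DW a b g (Suc l) = map ((#) a) (DW a b g l) @ map ((#) b) (DW a b g l) @ CW a b g l"

definition wev :: "('m \<Rightarrow> 'r::ring_1) \<Rightarrow> 'm list \<Rightarrow> 'r" where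
  "wev f w = foldr (\<lambda>z r. f z * r) w 1"

lemma wev_Nil[simp]: "wev f [] = 1" by (simp add: wev_def)
lemma wev_Cons[simp]: "wev f (z # w) = f z * wev f w" by (simp add: wev_def)
lemma wev_snoc[simp]: "wev f (w @ [z]) = wev f w * f z"
  by (induction w) (simp_all add: mult.assoc)

fun Frec :: "'r::ring_1 \<Rightarrow> 'r \<Rightarrow> nat \<Rightarrow> 'r" where
  "Frec x y 0 = 1"
| "Frec x y (Suc l) = y * Frec x y l + Frec x y l * x"

lemma sum_list_map_cons: "sum_list (map (\<lambda>w. c * h w) ws) = (c::'r::ring_1) * sum_list (map h ws)"
  by (induction ws) (simp_all add: distrib_left)
lemma sum_list_map_snoc: "sum_list (map (\<lambda>w. h w * c) ws) = sum_list (map h ws) * (c::'r::ring_1)"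
  by (induction ws) (simp_all add: distrib_right)

lemma FW_sum: "sum_list (map (wev f) (FW a b l)) = Frec (f a) (f b) l"
  by (induction l) (simp_all add: o_def sum_list_map_cons sum_list_map_snoc)

lemma CW_sum:
  assumes "f g = f a * f b - f b * f a"
  shows "sum_list (map (wev f) (CW a b g l)) = f a * Frec (f a) (f b) l - Frec (f a) (f b) l * f a"
proof (induction l)
  case 0 then show ?case by simp
next
  case (Suc l)
  have "sum_list (map (wev f) (CW a b g (Suc l))) = f g * Frec (f a) (f b) l
     + f b * sum_list (map (wev f) (CW a b g l)) + sum_list (map (wev f) (CW a b g l)) * f a"
    by (simp add: o_def sum_list_map_cons sum_list_map_snoc FW_sum)
  then show ?case by (simp add: Suc assms algebra_simps)
qed

lemma DW_sum:
  assumes "f g = f a * f b - f b * f a"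
  shows "sum_list (map (wev f) (DW a b g l)) = (f a + f b) ^ l - Frec (f a) (f b) l"
proof (induction l)
  case 0 then show ?case by simp
next
  case (Suc l)
  let ?F = "Frec (f a) (f b) l" and ?D = "sum_list (map (wev f) (DW a b g l))"
  have "sum_list (map (wev f) (DW a b g (Suc l))) = f a * ?D + f b * ?D + (f a * ?F - ?F * f a)"
    by (simp add: o_def sum_list_map_cons CW_sum[of f g a b, OF assms])
  also have "\<dots> = (f a + f b) * ?D + (f a * ?F - ?F * f a)" by (simp add: distrib_right)
  also have "\<dots> = (f a + f b) * (f a + f b) ^ l - (f b * ?F + ?F * f a)"
    unfolding Suc by (simp add: right_diff_distrib distrib_right)
  finally show ?case by simp
qed

lemma FW_len: "length (FW a b l) = 2 ^ l"
  by (induction l) simp_all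
lemma CW_len: "length (CW a b g l) \<le> l * 2 ^ l"
  by (induction l) (simp_all add: FW_len)
lemma DW_len: "length (DW a b g l) \<le> l\<^sup>2 * 2 ^ l"
proof (induction l)
  case 0 then show ?case by simp
next
  case (Suc l)
  have "length (DW a b g (Suc l)) \<le> 2 * (l\<^sup>2 * 2 ^ l) + l * 2 ^ l"
    using Suc CW_len[of a b g l] by simp
  also have "\<dots> \<le> (Suc l)\<^sup>2 * 2 ^ Suc l" by (simp add: power2_eq_square algebra_simps)
  finally show ?case .
qed

lemma FW_words: "w \<in> set (FW a b l) \<Longrightarrow> length w = l \<and> set w \<subseteq> {a, b}"
  by (induction l arbitrary: w) force+

definition oneg :: "'m \<Rightarrow> 'm \<Rightarrow> 'm \<Rightarrow> 'm list \<Rightarrow> bool" where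
  "oneg a b g w \<longleftrightarrow> (\<exists>u v. w = u @ [g] @ v \<and> set u \<subseteq> {a, b} \<and> set v \<subseteq> {a, b})"

lemma oneg_cons: "oneg a b g w \<Longrightarrow> z \<in> {a, b} \<Longrightarrow> oneg a b g (z # w)"
proof -
  assume "oneg a b g w" "z \<in> {a, b}"
  then obtain u v where "w = u @ [g] @ v" "set u \<subseteq> {a, b}" "set v \<subseteq> {a, b}" unfolding oneg_def by blast
  then show ?thesis unfolding oneg_def using \<open>z \<in> {a, b}\<close> by (intro exI[of _ "z # u"] exI[of _ v]) auto
qed
lemma oneg_snoc: "oneg a b g w \<Longrightarrow> z \<in> {a, b} \<Longrightarrow> oneg a b g (w @ [z])"
proof -
  assume "oneg a b g w" "z \<in> {a, b}"
  then obtain u v where "w = u @ [g] @ v" "set u \<subseteq> {a, b}" "set v \<subseteq> {a, b}" unfolding oneg_def by blast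
  then show ?thesis unfolding oneg_def using \<open>z \<in> {a, b}\<close> by (intro exI[of _ u] exI[of _ "v @ [z]"]) auto
qed
lemma oneg_g: "set w \<subseteq> {a, b} \<Longrightarrow> oneg a b g (g # w)"
  unfolding oneg_def by (rule exI[of _ "[]"]) auto

lemma CW_words: "w \<in> set (CW a b g l) \<Longrightarrow> length w = l \<and> oneg a b g w"
  by (induction l arbitrary: w) (auto dest: FW_words intro: oneg_cons oneg_snoc oneg_g)

lemma DW_words: "w \<in> set (DW a b g l) \<Longrightarrow> Suc (length w) = l \<and> oneg a b g w"
  by (induction l arbitrary: w) (auto dest: CW_words intro: oneg_cons)

lemma Frec_comm:
  assumes "s * x = x * s" "s * y = y * s"
  shows "s * Frec x y l = Frec x y l * s"
proof (induction l)
  case 0 then show ?case by simp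
next
  case (Suc l)
  let ?F = "Frec x y l"
  have "s * Frec x y (Suc l) = (s * y) * ?F + (s * ?F) * x" by (simp add: distrib_left mult.assoc)
  also have "\<dots> = y * (s * ?F) + ?F * (s * x)"
  proof -
    have e1: "(s * y) * ?F = y * (s * ?F)" unfolding assms(2) by (simp add: mult.assoc)
    have e2: "(s * ?F) * x = ?F * (s * x)" by (simp add: Suc mult.assoc[symmetric])
    show ?thesis unfolding e1 e2 ..
  qed
  also have "\<dots> = Frec x y (Suc l) * s" unfolding Suc assms(1) by (simp add: mult.assoc distrib_right)
  finally show ?case .
qed

lemma pow_comm_mult: "(s::'r::ring_1) * x = x * s \<Longrightarrow> (s * x) ^ l = s ^ l * x ^ l"
proof (induction l)
  case 0 then show ?case by simp
next
  case (Suc l)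
  have c: "x * s ^ l = s ^ l * x" using Suc.prems by (metis power_commuting_commutes)
  have "(s * x) ^ Suc l = s * x * (s ^ l * x ^ l)" using Suc by simp
  also have "\<dots> = s * (x * s ^ l) * x ^ l" by (simp add: mult.assoc)
  also have "\<dots> = s ^ Suc l * x ^ Suc l" by (simp add: c mult.assoc)
  finally show ?case .
qed

lemma Frec_scale:
  assumes "(s::'r::ring_1) * x = x * s" "s * y = y * s"
  shows "Frec (s * x) (s * y) l = s ^ l * Frec x y l"
proof (induction l)
  case 0 then show ?case by simp
next
  case (Suc l)
  have c1: "y * s ^ l = s ^ l * y" using assms by (metis power_commuting_commutes)
  have c2: "Frec x y l * s = s * Frec x y l" using Frec_comm assms by metis
  have c3: "y * (s ^ l * Frec x y l) = s ^ l * (y * Frec x y l)"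
    by (simp add: mult.assoc[symmetric] c1)
  have "Frec (s * x) (s * y) (Suc l) = s * (y * (s ^ l * Frec x y l)) + s ^ l * Frec x y l * (s * x)"
    using Suc by (simp add: mult.assoc)
  also have "\<dots> = s ^ Suc l * (y * Frec x y l) + s ^ l * (Frec x y l * s) * x"
    unfolding c3 by (simp add: mult.assoc)
  also have "\<dots> = s ^ Suc l * (y * Frec x y l) + s ^ Suc l * (Frec x y l * x)"
    unfolding c2 by (simp add: mult.assoc[symmetric] power_commutes)
  also have "\<dots> = s ^ Suc l * Frec x y (Suc l)"
    by (simp add: c2 distrib_left mult.assoc)
  finally show ?case .
qed



type_synonym 'n M = "complex^'n^'n"

lemma mm_add_r: "((A::'n::finite M) + B) ** C = A ** C + B ** C"
  by (simp add: matrix_matrix_mult_def vec_eq_iff distrib_right sum.distrib)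
lemma mm_add_l: "(A::'n::finite M) ** (B + C) = A ** B + A ** C"
  by (rule matrix_add_ldistrib)
lemma mm_diff_r: "((A::'n::finite M) - B) ** C = A ** C - B ** C"
  by (simp add: matrix_matrix_mult_def vec_eq_iff left_diff_distrib sum_subtractf)
lemma mm_diff_l: "(A::'n::finite M) ** (B - C) = A ** B - A ** C"
  by (simp add: matrix_matrix_mult_def vec_eq_iff right_diff_distrib sum_subtractf)
lemma mm_neg_r: "(- (A::'n::finite M)) ** C = - (A ** C)"
  by (simp add: matrix_matrix_mult_def vec_eq_iff sum_negf)
lemma mm_neg_l: "(A::'n::finite M) ** (- C) = - (A ** C)"
  by (simp add: matrix_matrix_mult_def vec_eq_iff sum_negf)
lemma mm_cscale_l: "cscale c (A::'n::finite M) ** B = cscale c (A ** B)"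
  by (simp add: matrix_matrix_mult_def cscale_def vec_eq_iff sum_distrib_left mult.assoc)
lemma mm_cscale_r: "(A::'n::finite M) ** cscale c B = cscale c (A ** B)"
  by (simp add: matrix_matrix_mult_def cscale_def vec_eq_iff sum_distrib_left mult_ac)
lemma mm_scaleR_l: "(r *\<^sub>R (A::'n::finite M)) ** B = r *\<^sub>R (A ** B)"
  by (simp add: scalar_matrix_assoc)
lemma mm_scaleR_r: "(A::'n::finite M) ** (r *\<^sub>R B) = r *\<^sub>R (A ** B)"
  by (simp add: matrix_scalar_ac scalar_matrix_assoc)

lemma cscale_add: "cscale c ((A::'n::finite M) + B) = cscale c A + cscale c B"
  by (simp add: cscale_def vec_eq_iff distrib_left)
lemma cscale_diff: "cscale c ((A::'n::finite M) - B) = cscale c A - cscale c B"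
  by (simp add: cscale_def vec_eq_iff right_diff_distrib)
lemma cscale_neg: "cscale c (- (A::'n::finite M)) = - cscale c A"
  by (simp add: cscale_def vec_eq_iff)
lemma cscale_negc: "cscale (- c) (A::'n::finite M) = - cscale c A"
  by (simp add: cscale_def vec_eq_iff)
lemma cscale_cscale: "cscale c (cscale d (A::'n::finite M)) = cscale (c * d) A"
  by (simp add: cscale_def vec_eq_iff mult.assoc)
lemma cscale_1: "cscale 1 (A::'n::finite M) = A"
  by (simp add: cscale_def vec_eq_iff)
lemma cscale_m1: "cscale (-1) (A::'n::finite M) = - A"
  by (simp add: cscale_def vec_eq_iff)
lemma cscale_0: "cscale c (0::'n::finite M) = 0"
  by (simp add: cscale_def vec_eq_iff)
lemma scaleR_cscale: "r *\<^sub>R (A::'n::finite M) = cscale (of_real r) A"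
  by (simp add: cscale_def vec_eq_iff) (simp add: scaleR_conv_of_real)
lemma cscale_scaleR: "cscale c (r *\<^sub>R (A::'n::finite M)) = r *\<^sub>R cscale c A"
  by (simp add: cscale_def vec_eq_iff scaleR_conv_of_real mult_ac)
lemma cscale_sum_list: "cscale c (sum_list (xs :: 'n::finite M list)) = sum_list (map (cscale c) xs)"
  by (induction xs) (simp_all add: cscale_0 cscale_add)

lemma lin_L: "bounded_linear (\<lambda>Y::'n::finite M. (A::'n M) ** Y)"
  by (rule linear_conv_bounded_linear[THEN iffD1], rule linearI) (simp_all add: mm_add_l mm_scaleR_r)
lemma lin_R: "bounded_linear (\<lambda>Y::'n::finite M. Y ** (A::'n M))"
  by (rule linear_conv_bounded_linear[THEN iffD1], rule linearI) (simp_all add: mm_add_r mm_scaleR_l)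
lemma lin_cs: "bounded_linear (\<lambda>Y::'n::finite M. cscale c Y)"
  by (rule linear_conv_bounded_linear[THEN iffD1], rule linearI) (simp_all add: cscale_add cscale_scaleR)

definition ap :: "'n::finite op \<Rightarrow> 'n M \<Rightarrow> 'n M" where "ap T Y = blinfun_apply (rep T) Y"
definition mkop :: "('n::finite M \<Rightarrow> 'n M) \<Rightarrow> 'n op" where "mkop f = Abs (Blinfun f)"

lemma ap_mkop: "bounded_linear f \<Longrightarrow> ap (mkop f) Y = f Y"
  unfolding ap_def mkop_def by (simp add: Abs_inverse bounded_linear_Blinfun_apply)
lemma op_eqI: "(\<And>Y. ap S Y = ap T Y) \<Longrightarrow> S = T"
  unfolding ap_def by (metis blinfun_eqI rep_inject)
lemma ap_mult: "ap (S * T) Y = ap S (ap T Y)"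
  by (simp add: ap_def times_op.rep_eq)
lemma ap_one: "ap 1 Y = Y"
  by (simp add: ap_def one_op.rep_eq)
lemma ap_add: "ap (S + T) Y = ap S Y + ap T Y"
  by (simp add: ap_def plus_op.rep_eq blinfun.bilinear_simps)
lemma ap_diff: "ap (S - T) Y = ap S Y - ap T Y"
  by (simp add: ap_def minus_op.rep_eq blinfun.bilinear_simps)
lemma ap_neg: "ap (- T) Y = - ap T Y"
  by (simp add: ap_def uminus_op.rep_eq blinfun.bilinear_simps)
lemma ap_zero: "ap 0 Y = 0"
  by (simp add: ap_def zero_op.rep_eq)
lemma ap_scaleR: "ap (r *\<^sub>R T) Y = r *\<^sub>R ap T Y"
  by (simp add: ap_def scaleR_op.rep_eq blinfun.bilinear_simps)
lemma ap_sum_list: "ap (sum_list Ts) Y = sum_list (map (\<lambda>T. ap T Y) Ts)"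
  by (induction Ts) (simp_all add: ap_zero ap_add)
lemma ap_bl: "bounded_linear (\<lambda>T. ap T Y)"
proof -
  have "bounded_linear (\<lambda>T. blinfun_apply T Y)" by simp
  then have "bounded_linear (\<lambda>T. blinfun_apply (rep T) Y)"
  proof -
    assume a: "bounded_linear (\<lambda>T. blinfun_apply T Y)"
    show ?thesis
    proof
      fix S T :: "'a op" and r :: real
      show "blinfun_apply (rep (S + T)) Y = blinfun_apply (rep S) Y + blinfun_apply (rep T) Y"
        by (simp add: plus_op.rep_eq blinfun.bilinear_simps)
      show "blinfun_apply (rep (r *\<^sub>R T)) Y = r *\<^sub>R blinfun_apply (rep T) Y"
        by (simp add: scaleR_op.rep_eq blinfun.bilinear_simps)
      show "\<exists>K. \<forall>x. norm (blinfun_apply (rep x) Y) \<le> norm x * K"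
        by (rule exI[of _ "norm Y"]) (simp add: norm_op.rep_eq norm_blinfun)
    qed
  qed
  then show ?thesis unfolding ap_def .
qed

definition Lm :: "'n::finite M \<Rightarrow> 'n op" where "Lm A = mkop (\<lambda>Y. A ** Y)"
definition Rm :: "'n::finite M \<Rightarrow> 'n op" where "Rm A = mkop (\<lambda>Y. Y ** A)"
definition Sc :: "complex \<Rightarrow> 'n::finite op" where "Sc c = mkop (cscale c)"
definition ad :: "'n::finite M \<Rightarrow> 'n op" where "ad A = Lm A - Rm A"

lemma ap_Lm[simp]: "ap (Lm A) Y = A ** Y" by (simp add: Lm_def ap_mkop lin_L)
lemma ap_Rm[simp]: "ap (Rm A) Y = Y ** A" by (simp add: Rm_def ap_mkop lin_R)
lemma ap_Sc[simp]: "ap (Sc c) Y = cscale c Y" 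
  unfolding Sc_def by (rule ap_mkop[OF lin_cs])
lemma ap_ad[simp]: "ap (ad A) Y = comm A Y" by (simp add: ad_def ap_diff comm_def)

lemma mpow_Suc: "mpow A (Suc k) = A ** mpow A k" by (simp add: mpow_def)
lemma mpow_0: "mpow A 0 = mat 1" by (simp add: mpow_def)

lemma ap_Lm_pow: "ap ((Lm A) ^ k) Y = mpow A k ** Y"
  by (induction k) (simp_all add: ap_one mpow_0 mpow_Suc ap_mult matrix_mul_assoc)
lemma ap_Rm_pow: "ap ((Rm A) ^ k) Y = Y ** mpow A k"
  by (induction k arbitrary: Y) (simp_all add: ap_one mpow_0 mpow_Suc ap_mult matrix_mul_assoc power_Suc2 del: power_Suc)

lemma exp_ap: "(\<lambda>k. ap (T ^ k) Y /\<^sub>R fact k) sums ap (exp T) Y"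
  using bounded_linear.sums[OF ap_bl exp_converges[of T], of Y] by (simp add: ap_scaleR)

lemma mexp_sums: "(\<lambda>k. (1 / fact k) *\<^sub>R mpow A k) sums ap (exp (Lm A)) (mat 1)"
  using exp_ap[of "Lm A" "mat 1"] by (simp add: ap_Lm_pow inverse_eq_divide)

lemma mexp_eq: "mexp A = ap (exp (Lm A)) (mat 1)"
  unfolding mexp_def using mexp_sums by (rule sums_unique[symmetric])

lemma exp_Lm: "ap (exp (Lm A)) Y = mexp A ** Y"
proof -
  have "(\<lambda>k. ((1 / fact k) *\<^sub>R mpow A k) ** Y) sums (mexp A ** Y)"
    using bounded_linear.sums[OF lin_R mexp_sums[of A], of Y] by (simp add: mexp_eq)
  moreover have "(\<lambda>k. ((1 / fact k) *\<^sub>R mpow A k) ** Y) sums ap (exp (Lm A)) Y"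
    using exp_ap[of "Lm A" Y] by (simp add: ap_Lm_pow mm_scaleR_l inverse_eq_divide)
  ultimately show ?thesis by (rule sums_unique2[symmetric])
qed

lemma exp_Rm: "ap (exp (Rm A)) Y = Y ** mexp A"
proof -
  have "(\<lambda>k. Y ** ((1 / fact k) *\<^sub>R mpow A k)) sums (Y ** mexp A)"
    using bounded_linear.sums[OF lin_L mexp_sums[of A], of Y] by (simp add: mexp_eq)
  moreover have "(\<lambda>k. Y ** ((1 / fact k) *\<^sub>R mpow A k)) sums ap (exp (Rm A)) Y"
    using exp_ap[of "Rm A" Y] by (simp add: ap_Rm_pow mm_scaleR_r inverse_eq_divide)
  ultimately show ?thesis by (rule sums_unique2[symmetric])
qed



lemma cauchy_Frec:
  fixes x y :: "'r::real_algebra_1"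
  shows "(\<Sum>i\<le>l. (y ^ i /\<^sub>R fact i) * (x ^ (l - i) /\<^sub>R fact (l - i))) = Frec x y l /\<^sub>R fact l"
proof (induction l)
  case 0 then show ?case by simp
next
  case (Suc l)
  define c where "c l = (\<Sum>i\<le>l. (y ^ i /\<^sub>R fact i) * (x ^ (l - i) /\<^sub>R fact (l - i)))" for l
  define T where "T j = (1 / (fact j * fact (Suc l - j))) *\<^sub>R (y ^ j * x ^ (Suc l - j))" for j
  have cT: "c (Suc l) = (\<Sum>j\<le>Suc l. T j)"
    unfolding c_def T_def by (intro sum.cong refl) (simp add: divide_inverse_commute mult.commute)
  have "y * c l = (\<Sum>i\<le>l. y * ((y ^ i /\<^sub>R fact i) * (x ^ (l - i) /\<^sub>R fact (l - i))))"
    unfolding c_def by (simp add: sum_distrib_left)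
  also have "\<dots> = (\<Sum>i\<le>l. real (Suc i) *\<^sub>R T (Suc i))"
  proof (intro sum.cong refl)
    fix i assume "i \<in> {..l}"
    then have e: "Suc l - Suc i = l - i" by simp
    have "real (Suc i) / (fact (Suc i) * fact (l - i)) = 1 / (fact i * fact (l - i))"
      by (simp add: fact_Suc field_simps del: of_nat_Suc)
    then show "y * ((y ^ i /\<^sub>R fact i) * (x ^ (l - i) /\<^sub>R fact (l - i))) = real (Suc i) *\<^sub>R T (Suc i)"
      unfolding T_def e by (simp add: mult.assoc divide_inverse_commute)
  qed
  also have "\<dots> = (\<Sum>j\<le>Suc l. real j *\<^sub>R T j)"
    by (subst sum.atMost_Suc_shift) simp
  finally have A: "y * c l = (\<Sum>j\<le>Suc l. real j *\<^sub>R T j)" .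
  have "c l * x = (\<Sum>i\<le>l. ((y ^ i /\<^sub>R fact i) * (x ^ (l - i) /\<^sub>R fact (l - i))) * x)"
    unfolding c_def by (simp add: sum_distrib_right)
  also have "\<dots> = (\<Sum>i\<le>l. real (Suc l - i) *\<^sub>R T i)"
  proof (intro sum.cong refl)
    fix i assume "i \<in> {..l}"
    then have e: "Suc l - i = Suc (l - i)" by simp
    have "real (Suc (l - i)) / (fact i * fact (Suc (l - i))) = 1 / (fact i * fact (l - i))"
      by (simp add: fact_Suc field_simps del: of_nat_Suc)
    then show "((y ^ i /\<^sub>R fact i) * (x ^ (l - i) /\<^sub>R fact (l - i))) * x = real (Suc l - i) *\<^sub>R T i"
      unfolding T_def e by (simp add: mult.assoc power_commutes divide_inverse_commute)
  qed
  also have "\<dots> = (\<Sum>j\<le>Suc l. real (Suc l - j) *\<^sub>R T j)"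
    by simp
  finally have B: "c l * x = (\<Sum>j\<le>Suc l. real (Suc l - j) *\<^sub>R T j)" .
  have "y * c l + c l * x = (\<Sum>j\<le>Suc l. (real j + real (Suc l - j)) *\<^sub>R T j)"
    unfolding A B by (simp only: sum.distrib scaleR_add_left)
  also have "\<dots> = (\<Sum>j\<le>Suc l. real (Suc l) *\<^sub>R T j)"
  proof (intro sum.cong refl)
    fix j assume "j \<in> {..Suc l}"
    then have "real j + real (Suc l - j) = real (Suc l)" by (simp add: of_nat_diff)
    then show "(real j + real (Suc l - j)) *\<^sub>R T j = real (Suc l) *\<^sub>R T j" by simp
  qed
  also have "\<dots> = real (Suc l) *\<^sub>R c (Suc l)"
    unfolding cT by (rule scaleR_sum_right[symmetric])
  finally have key: "real (Suc l) *\<^sub>R c (Suc l) = y * c l + c l * x" ..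
  have IH: "c l = Frec x y l /\<^sub>R fact l" using Suc unfolding c_def .
  have "c (Suc l) = (1 / real (Suc l)) *\<^sub>R (y * c l + c l * x)"
    unfolding key[symmetric] by simp
  also have "\<dots> = Frec x y (Suc l) /\<^sub>R fact (Suc l)"
  proof -
    have f: "inverse (fact (Suc l) :: real) = (1 / real (Suc l)) * inverse (fact l)"
      by (simp add: fact_Suc divide_inverse mult.commute del: of_nat_Suc)
    show ?thesis unfolding IH f by (simp add: scaleR_add_right del: of_nat_Suc)
  qed
  finally show ?case unfolding c_def .
qed



lemma Sc_comm_ad: "Sc c * ad Z = ad Z * (Sc c :: 'n::finite op)"
  by (rule op_eqI) (simp add: ap_mult comm_def mm_cscale_l mm_cscale_r cscale_diff)

lemma ad_comm: "ad (comm A B) = ad A * ad B - ad B * (ad A :: 'n::finite op)"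
  by (rule op_eqI) (simp add: ap_mult ap_diff comm_def mm_diff_l mm_diff_r matrix_mul_assoc algebra_simps)

lemma ad_add: "ad (A + B) = ad A + (ad B :: 'n::finite op)"
  by (rule op_eqI) (simp add: ap_add comm_def mm_add_l mm_add_r algebra_simps)

lemma ap_Sc_pow: "ap (Sc c ^ k) Y = cscale (c ^ k) (Y :: 'n::finite M)"
  by (induction k arbitrary: Y) (simp_all add: ap_one ap_mult cscale_1 cscale_cscale)

lemma ap_wev: "ap (wev ad w) Y = nested_comm w (Y :: 'n::finite M)"
  by (induction w) (simp_all add: ap_one ap_mult nested_comm_def)

lemma conj_exp:
  fixes Z Y :: "'n::finite M"
  shows "mexp (cscale s Z) ** Y ** mexp (cscale s (- Z)) = ap (exp (Sc s * ad Z)) Y"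
proof -
  have c: "Rm (cscale s (- Z)) * Lm (cscale s Z) = Lm (cscale s Z) * Rm (cscale s (- Z))"
    by (rule op_eqI) (simp add: ap_mult matrix_mul_assoc)
  have e: "Rm (cscale s (- Z)) + Lm (cscale s Z) = Sc s * ad Z"
    by (rule op_eqI) (simp add: ap_mult ap_add comm_def mm_cscale_l mm_cscale_r cscale_neg mm_neg_l cscale_diff)
  have "mexp (cscale s Z) ** Y ** mexp (cscale s (- Z)) = ap (exp (Rm (cscale s (- Z)))) (ap (exp (Lm (cscale s Z))) Y)"
    by (simp add: exp_Lm exp_Rm)
  also have "\<dots> = ap (exp (Rm (cscale s (- Z)) + Lm (cscale s Z))) Y"
    by (simp add: exp_add_commuting[OF c] ap_mult)
  finally show ?thesis unfolding e .
qed

lemma oneg_adm: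
  assumes "oneg A B G w"
  shows "\<exists>j<length w. w ! j = G \<and> (\<forall>k<length w. k \<noteq> j \<longrightarrow> w ! k = A \<or> w ! k = B)"
proof -
  obtain u v where w: "w = u @ [G] @ v" "set u \<subseteq> {A, B}" "set v \<subseteq> {A, B}"
    using assms unfolding oneg_def by blast
  show ?thesis
  proof (intro exI[of _ "length u"] conjI allI impI)
    show "length u < length w" using w by simp
    show "w ! length u = G" using w by (simp add: nth_append)
    fix k assume k: "k < length w" "k \<noteq> length u"
    show "w ! k = A \<or> w ! k = B"
    proof (cases "k < length u")
      case True
      then have "w ! k \<in> set u" using w by (simp add: nth_append)
      then show ?thesis using w by auto
    next
      case False
      then obtain m where m: "k = Suc (length u + m)" using k by (metis add_Suc_right less_imp_Suc_add linorder_neqE_nat)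
      then have "m < length v" using k w by simp
      then have "w ! k \<in> set v" using w m by (simp add: nth_append)
      then show ?thesis using w by auto
    qed
  qed
qed



lemma sum_list_neg_map: "sum_list (map (\<lambda>x. - f x) xs) = - sum_list (map f xs :: 'a::ab_group_add list)"
  by (induction xs) simp_all

theorem lemma3p13:
  fixes X H H0 :: "complex ^ 'n::finite ^ 'n"
  assumes "hermitian X" and "hermitian H" and "hermitian H0"
  shows "\<exists>C :: nat \<Rightarrow> complex ^ 'n ^ 'n.
           (\<forall>l\<ge>2. \<exists>terms :: (complex \<times> (complex ^ 'n ^ 'n) list) list.
               length terms \<le> 2 ^ l * l\<^sup>2 \<and>
               (\<forall>(s, Zs) \<in> set terms. (s = 1 \<or> s = -1) \<and> admissible l H H0 Zs) \<and>
               C l = (\<Sum>(s, Zs) \<leftarrow> terms. cscale s (nested_comm Zs X))) \<and>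
           (\<forall>t::real.
               (\<lambda>m. cscale ((\<i> * of_real t) ^ (m + 2) / of_nat (fact (m + 2))) (C (m + 2)))
               sums
               (mexp (cscale (- \<i> * of_real t) H0) ** mexp (cscale (\<i> * of_real t) H) ** X
                  ** mexp (cscale (- \<i> * of_real t) H) ** mexp (cscale (\<i> * of_real t) H0)
                - mexp (cscale (\<i> * of_real t) (H - H0)) ** X ** mexp (cscale (- \<i> * of_real t) (H - H0))))"
proof -
  define G where "G = comm H (- H0)"
  define W where "W l = DW H (- H0) G l" for l
  define C where "C l = (\<Sum>(s, Zs) \<leftarrow> map (\<lambda>w. (-1::complex, w)) (W l). cscale s (nested_comm Zs X))" for l
  have C_eq: "C l = - sum_list (map (\<lambda>w. nested_comm w X) (W l))" for l
    unfolding C_def by (simp add: o_def cscale_m1 sum_list_neg_map)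
  show ?thesis
  proof (intro exI[of _ C] conjI allI impI)
    fix l :: nat assume "2 \<le> l"
    show "\<exists>terms :: (complex \<times> (complex ^ 'n ^ 'n) list) list.
               length terms \<le> 2 ^ l * l\<^sup>2 \<and>
               (\<forall>(s, Zs) \<in> set terms. (s = 1 \<or> s = -1) \<and> admissible l H H0 Zs) \<and>
               C l = (\<Sum>(s, Zs) \<leftarrow> terms. cscale s (nested_comm Zs X))"
    proof (intro exI[of _ "map (\<lambda>w. (-1::complex, w)) (W l)"] conjI)
      show "length (map (\<lambda>w. (-1::complex, w)) (W l)) \<le> 2 ^ l * l\<^sup>2"
        using DW_len[of H "- H0" G l] unfolding W_def by (simp add: mult.commute)
      show "\<forall>(s, Zs) \<in> set (map (\<lambda>w. (-1::complex, w)) (W l)). (s = 1 \<or> s = -1) \<and> admissible l H H0 Zs"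
      proof clarsimp
        fix w assume "w \<in> set (W l)"
        then have "Suc (length w) = l \<and> oneg H (- H0) G w" using DW_words[of w H "- H0" G l] unfolding W_def by blast
        then show "admissible l H H0 w"
          unfolding admissible_def G_def using oneg_adm[of H "- H0" "comm H (- H0)" w] G_def by auto
      qed
    qed (simp add: C_def)
  next
    fix t :: real
    define s where "s = \<i> * of_real t"
    define a where "a = (ad H :: 'n op)"
    define b where "b = (ad (- H0) :: 'n op)"
    define \<sigma> where "\<sigma> = (Sc s :: 'n op)"
    have ca: "\<sigma> * a = a * \<sigma>" and cb: "\<sigma> * b = b * \<sigma>" and cab: "\<sigma> * (a + b) = (a + b) * \<sigma>"
      unfolding a_def b_def \<sigma>_def by (simp_all add: Sc_comm_ad distrib_left distrib_right)
    have cs1: "cscale (- \<i> * of_real t) Z = cscale s (- Z)" for Z :: "'n M"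
      by (simp add: cscale_def vec_eq_iff s_def)
    have cs2: "cscale (\<i> * of_real t) Z = cscale s (- (- Z))" for Z :: "'n M"
      by (simp add: s_def)
    have P: "mexp (cscale (- \<i> * of_real t) H0) ** mexp (cscale (\<i> * of_real t) H) ** X
                  ** mexp (cscale (- \<i> * of_real t) H) ** mexp (cscale (\<i> * of_real t) H0)
           = ap (exp (\<sigma> * b) * exp (\<sigma> * a)) X"
    proof -
      have "mexp (cscale (- \<i> * of_real t) H0) ** mexp (cscale (\<i> * of_real t) H) ** X
                  ** mexp (cscale (- \<i> * of_real t) H) ** mexp (cscale (\<i> * of_real t) H0)
          = mexp (cscale s (- H0)) ** (mexp (cscale s H) ** X ** mexp (cscale s (- H)))
               ** mexp (cscale s (- (- H0)))"
        unfolding cs1 by (simp add: s_def matrix_mul_assoc)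
      also have "\<dots> = ap (exp (\<sigma> * b) * exp (\<sigma> * a)) X"
        unfolding conj_exp by (simp add: ap_mult a_def b_def \<sigma>_def)
      finally show ?thesis .
    qed
    have Q: "mexp (cscale (\<i> * of_real t) (H - H0)) ** X ** mexp (cscale (- \<i> * of_real t) (H - H0))
           = ap (exp (\<sigma> * a + \<sigma> * b)) X"
    proof -
      have "H - H0 = H + - H0" by simp
      then have "ad (H - H0) = a + b" unfolding a_def b_def by (simp only: ad_add)
      moreover have "mexp (cscale s (H - H0)) ** X ** mexp (cscale s (- (H - H0))) = ap (exp (\<sigma> * ad (H - H0))) X"
        unfolding \<sigma>_def by (rule conj_exp)
      ultimately show ?thesis
        unfolding cs1 s_def[symmetric] by (simp only: distrib_left)
    qed
    have cauchy: "(\<lambda>k. \<Sum>i\<le>k. ((\<sigma> * b) ^ i /\<^sub>R fact i) * ((\<sigma> * a) ^ (k - i) /\<^sub>R fact (k - i)))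
        sums (exp (\<sigma> * b) * exp (\<sigma> * a))"
    proof -
      have "(\<lambda>k. \<Sum>i\<le>k. ((\<sigma> * b) ^ i /\<^sub>R fact i) * ((\<sigma> * a) ^ (k - i) /\<^sub>R fact (k - i)))
        sums ((\<Sum>n. (\<sigma> * b) ^ n /\<^sub>R fact n) * (\<Sum>n. (\<sigma> * a) ^ n /\<^sub>R fact n))"
        by (rule Cauchy_product_sums[OF summable_norm_exp summable_norm_exp])
      then show ?thesis by (simp add: exp_def)
    qed
    have ser: "(\<lambda>k. Frec (\<sigma> * a) (\<sigma> * b) k /\<^sub>R fact k - (\<sigma> * a + \<sigma> * b) ^ k /\<^sub>R fact k)
        sums (exp (\<sigma> * b) * exp (\<sigma> * a) - exp (\<sigma> * a + \<sigma> * b))"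
      using sums_diff[OF cauchy exp_converges] unfolding cauchy_Frec .
    have ser2: "(\<lambda>k. ap (Frec (\<sigma> * a) (\<sigma> * b) k /\<^sub>R fact k - (\<sigma> * a + \<sigma> * b) ^ k /\<^sub>R fact k) X)
        sums (ap (exp (\<sigma> * b) * exp (\<sigma> * a)) X - ap (exp (\<sigma> * a + \<sigma> * b)) X)"
      using bounded_linear.sums[OF ap_bl ser] by (simp add: ap_diff)
    have trm: "ap (Frec (\<sigma> * a) (\<sigma> * b) k /\<^sub>R fact k - (\<sigma> * a + \<sigma> * b) ^ k /\<^sub>R fact k) X
        = cscale (s ^ k / of_nat (fact k)) (C k)" for k
    proof -
      have adG: "ad G = a * b - b * a" unfolding G_def a_def b_def by (rule ad_comm)
      have D: "sum_list (map (wev ad) (W k)) = (a + b) ^ k - Frec a b k"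
        unfolding W_def a_def b_def by (rule DW_sum) (simp add: adG[unfolded a_def b_def])
      have "Frec (\<sigma> * a) (\<sigma> * b) k /\<^sub>R fact k - (\<sigma> * a + \<sigma> * b) ^ k /\<^sub>R fact k
          = (1 / fact k) *\<^sub>R (\<sigma> ^ k * (Frec a b k - (a + b) ^ k))"
        using Frec_scale[OF ca cb, of k] pow_comm_mult[OF cab, of k]
        by (simp add: distrib_left[symmetric] right_diff_distrib scaleR_diff_right divide_inverse_commute)
      also have "\<dots> = (1 / fact k) *\<^sub>R (\<sigma> ^ k * (- sum_list (map (wev ad) (W k))))"
        unfolding D by simp
      finally have "ap (Frec (\<sigma> * a) (\<sigma> * b) k /\<^sub>R fact k - (\<sigma> * a + \<sigma> * b) ^ k /\<^sub>R fact k) X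
          = (1 / fact k) *\<^sub>R cscale (s ^ k) (- sum_list (map (\<lambda>w. nested_comm w X) (W k)))"
        by (simp add: ap_scaleR ap_mult \<sigma>_def ap_Sc_pow ap_neg ap_sum_list o_def ap_wev cscale_neg)
      also have "\<dots> = cscale (s ^ k / of_nat (fact k)) (C k)"
        unfolding C_eq by (simp add: scaleR_cscale cscale_cscale divide_inverse mult.commute)
      finally show ?thesis .
    qed
    have W01: "W 0 = []" "W 1 = []" "W (Suc 0) = []" unfolding W_def by simp_all
    have "(\<lambda>k. cscale (s ^ k / of_nat (fact k)) (C k))
        sums (ap (exp (\<sigma> * b) * exp (\<sigma> * a)) X - ap (exp (\<sigma> * a + \<sigma> * b)) X)"
      using ser2 unfolding trm .
    then have "(\<lambda>m. cscale (s ^ (m + 2) / of_nat (fact (m + 2))) (C (m + 2)))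
        sums (ap (exp (\<sigma> * b) * exp (\<sigma> * a)) X - ap (exp (\<sigma> * a + \<sigma> * b)) X)"
      by (subst sums_zero_iff_shift) (auto simp: C_eq W01 cscale_0 less_2_cases_iff)
    then show "(\<lambda>m. cscale ((\<i> * of_real t) ^ (m + 2) / of_nat (fact (m + 2))) (C (m + 2)))
               sums
               (mexp (cscale (- \<i> * of_real t) H0) ** mexp (cscale (\<i> * of_real t) H) ** X
                  ** mexp (cscale (- \<i> * of_real t) H) ** mexp (cscale (\<i> * of_real t) H0)
                - mexp (cscale (\<i> * of_real t) (H - H0)) ** X ** mexp (cscale (- \<i> * of_real t) (H - H0)))"
      unfolding P Q s_def .
  qed
qed


end
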